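(* Let $\mu$ be a probability distribution on $\mathbb{Z}_{\ge0}$ with mean $m=\sum_k k\mu_k<1$ and $\mu_n\sim L(n)/n^2$ as $n\to\infty$, where $L:\mathbb{R}_+\to(0,\infty)$ is slowly varying. Let $X$ be a random variable with $\mathbb{P}(X=i)=\mu_{i+1}$ for integers $i\ge -1$. Let $(a_n)_{n\ge1}$ be a sequence with $n\mathbb{P}(X\ge a_n)\to1$, set $b_n=n\mathbb{E}[X\mathbb{1}_{|X|\le a_n}]$, and set $\ell^\star(n)=\sum_{k=n}^\infty L(k)/k$ for $n\ge1$. Then as $n\to\infty$: (i) $\ell^\star$ is slowly varying, $\ell^\star(n)\to0$, and $L(n)=o(\ell^\star(n))$; (ii) $b_n+n(1-m)\sim -n\,\ell^\star(a_n)$ and $b_n\sim -n(1-m)$; (iii) $a_n=o(n)$.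
   Context: A function $L$ is slowly varying if $L(ax)/L(x)\to1$ as $x\to\infty$ for every $a>0$. The quantity $\ell^\star(n)$ is finite since $\mu$ has finite mean. *)

theory Defs
  imports "HOL-Analysis.Analysis" "HOL-Library.Landau_Symbols"
begin

definition slowly_varying :: "(real \<Rightarrow> real) \<Rightarrow> bool" where
  "slowly_varying L \<longleftrightarrow> (\<forall>a>0. ((\<lambda>x. L (a * x) / L x) \<longlongrightarrow> 1) at_top)"

text \<open>X takes value i with probability mu (i+1), i.e. X = K - 1 where P(K = k) = mu k.
  P(X \<ge> a):\<close>
definition tailX :: "(nat \<Rightarrow> real) \<Rightarrow> real \<Rightarrow> real" where
  "tailX mu a = infsum mu {k. real k - 1 \<ge> a}"

definition trunc_meanX :: "(nat \<Rightarrow> real) \<Rightarrow> real \<Rightarrow> real" where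
  "trunc_meanX mu a = (\<Sum>k\<in>{k. \<bar>real k - 1\<bar> \<le> a}. (real k - 1) * mu k)"

definition ell_star :: "(real \<Rightarrow> real) \<Rightarrow> real \<Rightarrow> real" where
  "ell_star L x = infsum (\<lambda>k::nat. L (real k) / real k) {k. real k \<ge> x}"

end

theory Submission
  imports Defs
begin


lemma uct_aux:
  fixes h :: "real \<Rightarrow> real" and z :: "nat \<Rightarrow> real"
  assumes hm: "h \<in> borel_measurable borel"
    and hlim: "\<And>u. u \<ge> 0 \<Longrightarrow> ((\<lambda>x. h (x + u) - h x) \<longlongrightarrow> 0) at_top"
    and T: "T > 0" and e: "e > 0" and z: "\<And>n. z n \<ge> real n"
  shows "(\<lambda>n. measure lborel {s\<in>{0..2*T}. \<exists>m\<ge>n. e \<le> \<bar>h (z m + s) - h (z m)\<bar>}) \<longlonglongrightarrow> 0"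
proof -
  define E where "E n = {s\<in>{0..2*T}. \<exists>m\<ge>n. e \<le> \<bar>h (z m + s) - h (z m)\<bar>}" for n
  have meas: "E n \<in> sets lborel" for n
  proof -
    have "E n = {0..2*T} \<inter> (\<Union>m\<in>{n..}. {s. e \<le> \<bar>h (z m + s) - h (z m)\<bar>})"
      unfolding E_def by auto
    also have "\<dots> \<in> sets lborel"
      using hm by measurable
    finally show ?thesis .
  qed
  have dec: "decseq E"
    unfolding decseq_def E_def by (auto 4 4 intro: le_trans)
  have zlim: "filterlim z at_top sequentially"
    by (rule filterlim_at_top_mono[OF filterlim_real_sequentially]) (use z in auto)
  have empty: "(\<Inter>i. E i) = {}"
  proof safe
    fix s assume s: "s \<in> (\<Inter>i. E i)"
    then have s0: "s \<ge> 0" by (auto simp: E_def)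
    have "((\<lambda>m. h (z m + s) - h (z m)) \<longlongrightarrow> 0) sequentially"
      using filterlim_compose[OF hlim[OF s0] zlim] by simp
    then have "eventually (\<lambda>m. \<bar>h (z m + s) - h (z m)\<bar> < e) sequentially"
      using e by (auto simp: tendsto_iff dist_real_def dest!: spec[of _ e])
    then obtain N where N: "\<And>m. m \<ge> N \<Longrightarrow> \<bar>h (z m + s) - h (z m)\<bar> < e"
      by (auto simp: eventually_sequentially)
    from s have "s \<in> E N" by auto
    then show "s \<in> {}" using N by (force simp: E_def)
  qed
  have fin: "emeasure lborel (E i) \<noteq> \<infinity>" for i
  proof -
    have "emeasure lborel (E i) \<le> emeasure lborel {0..2*T}"
      by (rule emeasure_mono) (auto simp: E_def)
    then show ?thesis using T by (auto simp: top_unique)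
  qed
  have "(\<lambda>n. measure lborel (E n)) \<longlonglongrightarrow> measure lborel (\<Inter>i. E i)"
    by (rule Lim_measure_decseq) (use meas dec fin in auto)
  then show ?thesis using empty by (simp add: E_def)
qed

lemma E_meas:
  fixes h :: "real \<Rightarrow> real" and z :: "nat \<Rightarrow> real"
  assumes hm: "h \<in> borel_measurable borel"
  shows "{s\<in>{0..2*T}. \<exists>m\<ge>n. e \<le> \<bar>h (z m + s) - h (z m)\<bar>} \<in> sets lborel"
proof -
  have "{s\<in>{0..2*T}. \<exists>m\<ge>n. e \<le> \<bar>h (z m + s) - h (z m)\<bar>} = {0..2*T} \<inter> (\<Union>m\<in>{n..}. {s. e \<le> \<bar>h (z m + s) - h (z m)\<bar>})"
    by auto
  also have "\<dots> \<in> sets lborel"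
    using hm by measurable
  finally show ?thesis .
qed

lemma uct_add:
  fixes h :: "real \<Rightarrow> real"
  assumes hm: "h \<in> borel_measurable borel"
    and hlim: "\<And>u. u \<ge> 0 \<Longrightarrow> ((\<lambda>x. h (x + u) - h x) \<longlongrightarrow> 0) at_top"
    and T: "T > 0" and e: "e > 0"
  shows "eventually (\<lambda>x. \<forall>u\<in>{0..T}. \<bar>h (x + u) - h x\<bar> < 2*e) at_top"
proof (rule ccontr)
  assume "\<not> ?thesis"
  then have "\<forall>n::nat. \<exists>x\<ge>real n. \<exists>u\<in>{0..T}. 2*e \<le> \<bar>h (x + u) - h x\<bar>"
    by (auto simp: eventually_at_top_linorder not_less)
  then obtain x u where x: "\<And>n. x n \<ge> real n" and u: "\<And>n. u n \<in> {0..T}"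
     and bad: "\<And>n. 2*e \<le> \<bar>h (x n + u n) - h (x n)\<bar>"
    by metis
  define y where "y n = x n + u n" for n
  have y: "y n \<ge> real n" for n using x[of n] u[of n] by (auto simp: y_def)
  define E where "E z n = {s\<in>{0..2*T}. \<exists>m\<ge>n. e \<le> \<bar>h (z m + s) - h (z m)\<bar>}" for z :: "nat \<Rightarrow> real" and n :: nat
  have meas: "E z n \<in> sets lborel" for z n
    unfolding E_def by (rule E_meas[OF hm])
  have sub: "E z n \<subseteq> {0..2*T}" for z n by (auto simp: E_def)
  have lx: "(\<lambda>n. measure lborel (E x n)) \<longlonglongrightarrow> 0"
    unfolding E_def by (rule uct_aux[OF hm hlim T e x])
  have ly: "(\<lambda>n. measure lborel (E y n)) \<longlonglongrightarrow> 0"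
    unfolding E_def by (rule uct_aux[OF hm hlim T e y])
  have "eventually (\<lambda>n. measure lborel (E x n) < T/4) sequentially"
    using order_tendstoD(2)[OF lx, of "T/4"] T by simp
  moreover have "eventually (\<lambda>n. measure lborel (E y n) < T/4) sequentially"
    using order_tendstoD(2)[OF ly, of "T/4"] T by simp
  ultimately obtain n where n1: "measure lborel (E x n) < T/4" and n2: "measure lborel (E y n) < T/4"
    by (metis (mono_tags, lifting) eventually_conj_iff eventually_sequentially order_refl)
  define P where "P = (+) (- u n) -` E y n"
  have Pmeas: "P \<in> sets lborel"
  proof -
    have "(+) (- u n) -` E y n \<inter> space lborel \<in> sets lborel"
      by (rule measurable_sets[OF _ meas[of y n]]) simp
    then show ?thesis by (simp add: P_def)
  qed
  have Pm: "measure lborel P = measure lborel (E y n)"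
  proof -
    have "measure (distr lborel borel ((+) (- u n))) (E y n) = measure lborel ((+) (- u n) -` E y n \<inter> space lborel)"
      by (rule measure_distr) (use meas[of y n] in auto)
    then show ?thesis by (simp add: lborel_distr_plus P_def)
  qed
  have Psub: "P \<subseteq> {0..3*T}" using sub[of y n] u[of n] by (auto simp: P_def)
  have fm: "E x n \<union> P \<in> fmeasurable lborel"
  proof (rule fmeasurableI2)
    show "{0..3*T} \<in> fmeasurable lborel" by (rule fmeasurableI) (use T in auto)
    show "E x n \<union> P \<subseteq> {0..3*T}" using Psub sub[of x n] T by auto
    show "E x n \<union> P \<in> sets lborel" using meas Pmeas by auto
  qed
  have "\<exists>s\<in>{u n..2*T}. s \<notin> E x n \<union> P"
  proof (rule ccontr)
    assume "\<not> ?thesis"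
    then have "{u n..2*T} \<subseteq> E x n \<union> P" by auto
    then have "measure lborel {u n..2*T} \<le> measure lborel (E x n \<union> P)"
      by (rule measure_mono_fmeasurable) (use fm in auto)
    also have "\<dots> \<le> measure lborel (E x n) + measure lborel P"
      by (rule measure_Un_le) (use meas Pmeas in auto)
    finally show False using n1 n2 Pm u[of n] T by (simp add: measure_def)
  qed
  then obtain s where s: "s \<in> {u n..2*T}" "s \<notin> E x n" "s \<notin> P" by blast
  have s1: "\<bar>h (x n + s) - h (x n)\<bar> < e" using s(1,2) u[of n] by (force simp: E_def)
  have s2: "\<bar>h (y n + (s - u n)) - h (y n)\<bar> < e" using s(1,3) u[of n] by (force simp: E_def P_def)
  have "y n + (s - u n) = x n + s" by (simp add: y_def)
  then show False using s1 s2 bad[of n] by (simp add: y_def)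
qed

lemma uct_L:
  fixes L :: "real \<Rightarrow> real" and M :: real
  assumes L_pos': "\<forall>x. x > 0 \<longrightarrow> L x > 0"
    and L_meas: "L \<in> borel_measurable borel"
    and L_sv: "slowly_varying L"
    and M: "M \<ge> 1"
  shows "eventually (\<lambda>N. \<forall>k. N \<le> k \<and> real k \<le> M * real N \<longrightarrow>
            L (real N) / 2 \<le> L (real k) \<and> L (real k) \<le> 2 * L (real N)) sequentially"
proof -
  have L_pos: "L x > 0" if "x > 0" for x using L_pos' that by blast
  define h where "h t = ln (L (exp t))" for t
  have hm: "h \<in> borel_measurable borel" unfolding h_def using L_meas by measurable
  have hlim: "((\<lambda>x. h (x + u) - h x) \<longlongrightarrow> 0) at_top" if u: "u \<ge> 0" for u
  proof -
    have "((\<lambda>x. L (exp u * x) / L x) \<longlongrightarrow> 1) at_top"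
      using L_sv unfolding slowly_varying_def by auto
    from filterlim_compose[OF this exp_at_top]
    have "((\<lambda>x. L (exp u * exp x) / L (exp x)) \<longlongrightarrow> 1) at_top" by simp
    from tendsto_ln[OF this] have "((\<lambda>x. ln (L (exp u * exp x) / L (exp x))) \<longlongrightarrow> 0) at_top" by simp
    moreover have "ln (L (exp u * exp x) / L (exp x)) = h (x + u) - h x" for x
      using L_pos[of "exp x"] L_pos[of "exp u * exp x"]
      by (simp add: h_def ln_div exp_add mult.commute)
    ultimately show ?thesis by simp
  qed
  have T: "ln M + 1 > 0" using M by (smt (verit) ln_ge_zero)
  have e: "ln 2 / 2 > (0::real)" by simp
  have "eventually (\<lambda>x. \<forall>u\<in>{0..ln M + 1}. \<bar>h (x + u) - h x\<bar> < 2 * (ln 2 / 2)) at_top"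
    by (rule uct_add[OF hm _ T e]) (rule hlim)
  then have "\<exists>X. \<forall>t\<ge>X. \<forall>u\<in>{0..ln M + 1}. \<bar>h (t + u) - h t\<bar> < ln 2"
    by (simp add: eventually_at_top_linorder)
  then obtain X where X: "\<forall>t\<ge>X. \<forall>u\<in>{0..ln M + 1}. \<bar>h (t + u) - h t\<bar> < ln 2"
    by blast
  have "filterlim (\<lambda>N. ln (real N)) at_top sequentially"
    by (rule filterlim_compose[OF ln_at_top filterlim_real_sequentially])
  then have ev: "eventually (\<lambda>N. ln (real N) \<ge> X) sequentially"
    by (simp add: filterlim_at_top)
  have ev1: "eventually (\<lambda>N::nat. N \<ge> 1) sequentially" by (rule eventually_ge_at_top)
  show ?thesis
    using ev ev1
  proof eventually_elim
    case (elim N)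
    show ?case
    proof safe
      fix k assume k: "N \<le> k" "real k \<le> M * real N"
      have Npos: "real N > 0" using elim by auto
      have kpos: "real k > 0" using k elim by auto
      define u where "u = ln (real k) - ln (real N)"
      have u0: "u \<ge> 0" using k Npos by (simp add: u_def)
      have "ln (real k) \<le> ln (M * real N)" using k kpos by simp
      then have "u \<le> ln M" using Npos M by (simp add: u_def ln_mult)
      then have "u \<in> {0..ln M + 1}" using u0 by simp
      from X[rule_format, OF elim(1) this]
      have "\<bar>ln (L (real k)) - ln (L (real N))\<bar> < ln 2"
        using Npos kpos by (simp add: h_def u_def)
      moreover have LN: "L (real N) > 0" "L (real k) > 0" using L_pos Npos kpos by auto
      ultimately have a1: "ln (L (real k)) < ln (2 * L (real N))" and a2: "ln (L (real N)) < ln (2 * L (real k))"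
        by (simp_all add: ln_mult)
      show "L (real N) / 2 \<le> L (real k)" using a2 LN by simp
      show "L (real k) \<le> 2 * L (real N)" using a1 LN by simp
    qed
  qed
qed



definition tls :: "(nat \<Rightarrow> real) \<Rightarrow> nat \<Rightarrow> real" where
  "tls f N = (\<Sum>i. f (i + N))"

context
  fixes f :: "nat \<Rightarrow> real"
  assumes fnn: "\<And>k. f k \<ge> 0" and fs: "summable f"
begin

lemma tl_eq: "tls f N = suminf f - (\<Sum>i<N. f i)"
  unfolding tls_def by (rule suminf_minus_initial_segment[OF fs])

lemma tl_lim: "(\<lambda>N. tls f N) \<longlonglongrightarrow> 0"
proof -
  have "(\<lambda>N. suminf f - (\<Sum>i<N. f i)) \<longlonglongrightarrow> suminf f - suminf f"
    by (intro tendsto_intros summable_LIMSEQ[OF fs])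
  then show ?thesis by (simp add: tl_eq)
qed

lemma tl_diff: "N \<le> N' \<Longrightarrow> tls f N - tls f N' = (\<Sum>i\<in>{N..<N'}. f i)"
proof -
  assume "N \<le> N'"
  then have "(\<Sum>i<N'. f i) = (\<Sum>i<N. f i) + (\<Sum>i\<in>{N..<N'}. f i)"
    by (metis lessThan_atLeast0 sum.atLeastLessThan_concat zero_le)
  then show ?thesis by (simp add: tl_eq)
qed

lemma tl_nonneg: "tls f N \<ge> 0"
  unfolding tls_def using summable_ignore_initial_segment[OF fs, of N] fnn
  by (simp add: suminf_nonneg)

lemma tl_mono: "N \<le> N' \<Longrightarrow> tls f N' \<le> tls f N"
  using tl_diff[of N N'] sum_nonneg[of "{N..<N'}" f] fnn by force

lemma tl_ge_sum: "N \<le> N' \<Longrightarrow> (\<Sum>i\<in>{N..<N'}. f i) \<le> tls f N"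
  using tl_diff[of N N'] tl_nonneg[of N'] by simp

lemma tl_Suc: "tls f N = f N + tls f (Suc N)"
  using tl_diff[of N "Suc N"] by simp

lemma infsum_tl: "infsum f {k. real k \<ge> y} = tls f (nat \<lceil>y\<rceil>)"
proof -
  define N where "N = nat \<lceil>y\<rceil>"
  have set: "{k. real k \<ge> y} = (\<lambda>i. i + N) ` UNIV"
  proof safe
    fix k assume "y \<le> real k"
    then have "k \<ge> N" unfolding N_def by linarith
    then show "k \<in> range (\<lambda>i. i + N)" by (intro image_eqI[of _ _ "k - N"]) auto
  next
    fix i show "y \<le> real (i + N)" unfolding N_def by linarith
  qed
  have "infsum f {k. real k \<ge> y} = infsum (f \<circ> (\<lambda>i. i + N)) UNIV"
    unfolding set by (rule infsum_reindex) (auto simp: inj_on_def)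
  also have "\<dots> = tls f N"
  proof (rule infsumI)
    show "((f \<circ> (\<lambda>i. i + N)) has_sum tls f N) UNIV"
      unfolding tls_def comp_def
      by (rule sums_nonneg_imp_has_sum) (use summable_ignore_initial_segment[OF fs, of N] fnn in auto)
  qed
  finally show ?thesis by (simp add: N_def)
qed

end



lemma harm_ln:
  assumes "1 \<le> n" "n \<le> N"
  shows "ln (real N) - ln (real n) \<le> (\<Sum>k\<in>{n..<N}. 1 / real k)"
  using assms(2)
proof (induction N rule: dec_induct)
  case base then show ?case by simp
next
  case (step N)
  have N1: "real N \<ge> 1" using assms step by simp
  have "ln (real (Suc N)) - ln (real N) = ln (1 + 1 / real N)"
  proof -
    have "1 + 1 / real N = real (Suc N) / real N" using N1 by (simp add: field_simps)
    then show ?thesis using N1 by (simp add: ln_div)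
  qed
  also have "\<dots> \<le> 1 / real N" by (rule ln_add_one_self_le_self) simp
  finally have "ln (real (Suc N)) - ln (real N) \<le> 1 / real N" .
  moreover have "(\<Sum>k\<in>{n..<Suc N}. 1 / real k) = (\<Sum>k\<in>{n..<N}. 1 / real k) + 1 / real N"
    using step by simp
  ultimately show ?case using step.IH by linarith
qed

lemma filterlim_nat_ceiling: "filterlim (\<lambda>x::real. nat \<lceil>x\<rceil>) sequentially at_top"
  unfolding filterlim_at_top eventually_at_top_linorder
proof (intro allI exI allI impI)
  fix Z :: nat and x :: real assume "real Z \<le> x"
  then show "Z \<le> nat \<lceil>x\<rceil>" by linarith
qed

lemma tail_equiv:
  fixes f g :: "nat \<Rightarrow> real"
  assumes fnn: "\<And>k. f k \<ge> 0" and gnn: "\<And>k. g k \<ge> 0" and gs: "summable g"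
    and fg: "f \<sim>[sequentially] g"
  shows "summable f" and "(\<lambda>N. tls f N) \<sim>[sequentially] (\<lambda>N. tls g N)"
proof -
  have "eventually (\<lambda>k. norm (f k) \<le> 2 * norm (g k)) sequentially"
    by (rule asymp_equiv_imp_eventually_le[OF fg]) simp
  then show fs: "summable f"
    by (rule summable_comparison_test_ev) (use gs gnn summable_mult in auto)
  show "(\<lambda>N. tls f N) \<sim>[sequentially] (\<lambda>N. tls g N)"
    unfolding asymp_equiv_altdef
  proof (rule landau_o.smallI)
    fix c :: real assume c: "c > 0"
    have "(\<lambda>k. f k - g k) \<in> o[sequentially](g)" using fg by (simp add: asymp_equiv_altdef)
    from landau_o.smallD[OF this c]
    obtain N0 where N0: "\<And>k. k \<ge> N0 \<Longrightarrow> \<bar>f k - g k\<bar> \<le> c * \<bar>g k\<bar>"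
      by (auto simp: eventually_sequentially)
    show "eventually (\<lambda>N. norm (tls f N - tls g N) \<le> c * norm (tls g N)) sequentially"
      using eventually_ge_at_top[of N0]
    proof eventually_elim
      case (elim N)
      have sf: "summable (\<lambda>i. f (i + N))" by (rule summable_ignore_initial_segment[OF fs])
      have sg: "summable (\<lambda>i. g (i + N))" by (rule summable_ignore_initial_segment[OF gs])
      have d: "tls f N - tls g N = (\<Sum>i. f (i + N) - g (i + N))"
        unfolding tls_def using suminf_diff[OF sf sg] by simp
      have sd: "summable (\<lambda>i. f (i + N) - g (i + N))" using sf sg by (rule summable_diff)
      have scg: "summable (\<lambda>i. c * g (i + N))" using sg by (rule summable_mult)
      have b: "\<bar>f (i + N) - g (i + N)\<bar> \<le> c * g (i + N)" for i
        using N0[of "i + N"] elim gnn[of "i+N"] by simp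
      have "(\<Sum>i. f (i + N) - g (i + N)) \<le> (\<Sum>i. c * g (i + N))"
        by (rule suminf_le[OF _ sd scg]) (use b in \<open>simp add: abs_le_iff\<close>)
      moreover have "(\<Sum>i. - (c * g (i + N))) \<le> (\<Sum>i. f (i + N) - g (i + N))"
        by (rule suminf_le[OF _ summable_minus[OF scg] sd]) (smt (verit) b)
      moreover have "(\<Sum>i. c * g (i + N)) = c * tls g N"
        unfolding tls_def using suminf_mult[OF sg] by simp
      moreover have "(\<Sum>i. - (c * g (i + N))) = - (c * tls g N)"
        unfolding tls_def using suminf_minus[OF scg] suminf_mult[OF sg] by simp
      moreover have "tls g N \<ge> 0" by (rule tl_nonneg[OF gnn gs])
      ultimately show ?case using d c by (simp add: abs_le_iff)
    qed
  qed
qed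

lemma nat_ceil_bounds:
  fixes y :: real assumes "y \<ge> 0"
  shows "y \<le> real (nat \<lceil>y\<rceil>)" "real (nat \<lceil>y\<rceil>) \<le> y + 1"
proof -
  have "\<lceil>y\<rceil> \<ge> 0" using assms by simp
  then have e: "real (nat \<lceil>y\<rceil>) = of_int \<lceil>y\<rceil>" by simp
  show "y \<le> real (nat \<lceil>y\<rceil>)" unfolding e by simp
  show "real (nat \<lceil>y\<rceil>) \<le> y + 1" unfolding e by simp
qed

lemma nat_floor_bounds:
  fixes y :: real assumes "y \<ge> 0"
  shows "real (nat \<lfloor>y\<rfloor>) \<le> y" "y < real (nat \<lfloor>y\<rfloor>) + 1"
proof -
  have "\<lfloor>y\<rfloor> \<ge> 0" using assms by simp
  then have e: "real (nat \<lfloor>y\<rfloor>) = of_int \<lfloor>y\<rfloor>" by simp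
  show "real (nat \<lfloor>y\<rfloor>) \<le> y" unfolding e by simp
  show "y < real (nat \<lfloor>y\<rfloor>) + 1" unfolding e by simp
qed



theorem lemma2p2:
  fixes mu :: "nat \<Rightarrow> real" and L :: "real \<Rightarrow> real" and a :: "nat \<Rightarrow> real"
  assumes mu_nonneg: "\<And>k. mu k \<ge> 0"
    and mu_prob: "mu sums 1"
    and mean_fin: "summable (\<lambda>k. real k * mu k)"
    and mean_lt1: "(\<Sum>k. real k * mu k) < 1"
    and L_pos: "\<And>x. x > 0 \<Longrightarrow> L x > 0"
    and L_meas: "L \<in> borel_measurable borel"
    and L_sv: "slowly_varying L"
    and mu_asymp: "mu \<sim>[sequentially] (\<lambda>n. L (real n) / (real n)\<^sup>2)"
    and a_def: "(\<lambda>n. real n * tailX mu (a n)) \<longlonglongrightarrow> 1"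
  shows "slowly_varying (ell_star L)
       \<and> (ell_star L \<longlongrightarrow> 0) at_top
       \<and> (\<lambda>n. L (real n)) \<in> o[sequentially](\<lambda>n. ell_star L (real n))
       \<and> (\<lambda>n. real n * trunc_meanX mu (a n) + real n * (1 - (\<Sum>k. real k * mu k)))
            \<sim>[sequentially] (\<lambda>n. - real n * ell_star L (a n))
       \<and> (\<lambda>n. real n * trunc_meanX mu (a n))
            \<sim>[sequentially] (\<lambda>n. - real n * (1 - (\<Sum>k. real k * mu k)))
       \<and> a \<in> o[sequentially](\<lambda>n. real n)"
proof -
  define m where "m = (\<Sum>k. real k * mu k)"
  have L_pos': "\<forall>x. x > 0 \<longrightarrow> L x > 0" using L_pos by blast
  define ll where "ll k = L (real k) / real k" for k :: nat
  define T where "T N = tls ll N" for N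
  have ll_nn: "ll k \<ge> 0" for k
    using L_pos[of "real k"] by (cases "k = 0") (auto simp: ll_def)
  have ll_pos: "ll k > 0" if "k \<ge> 1" for k
    using L_pos[of "real k"] that by (auto simp: ll_def)
  have ll_eq: "(\<lambda>k. real k * mu k) \<sim>[sequentially] ll"
  proof -
    have "(\<lambda>k. real k * mu k) \<sim>[sequentially] (\<lambda>k. real k * (L (real k) / (real k)\<^sup>2))"
      by (rule asymp_equiv_mult[OF asymp_equiv_refl mu_asymp])
    moreover have "(\<lambda>k. real k * (L (real k) / (real k)\<^sup>2)) = ll"
      by (auto simp: ll_def power2_eq_square fun_eq_iff)
    ultimately show ?thesis by simp
  qed
  have ll_sum: "summable ll"
    by (rule tail_equiv(1)[OF ll_nn _ mean_fin asymp_equiv_symI[OF ll_eq]]) (simp add: mu_nonneg)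
  have ES: "ell_star L x = T (nat \<lceil>x\<rceil>)" for x
  proof -
    have "ell_star L x = infsum ll {k. real k \<ge> x}"
      by (simp add: ell_star_def ll_def[abs_def])
    also have "\<dots> = T (nat \<lceil>x\<rceil>)" unfolding T_def by (rule infsum_tl[OF ll_nn ll_sum])
    finally show ?thesis .
  qed
  have T_Suc: "T N = ll N + T (Suc N)" for N unfolding T_def by (rule tl_Suc[OF ll_nn ll_sum])
  have T_nn: "T N \<ge> 0" for N unfolding T_def by (rule tl_nonneg[OF ll_nn ll_sum])
  have T_pos: "T N > 0" for N
    using T_Suc[of N] T_Suc[of "Suc N"] ll_nn[of N] T_nn[of "Suc (Suc N)"] ll_pos[of "Suc N"] by simp
  have T_lim: "T \<longlonglongrightarrow> 0" unfolding T_def by (rule tl_lim[OF ll_nn ll_sum])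
  have ES_pos: "ell_star L x > 0" for x using ES T_pos by simp
  have A: "(\<lambda>n. L (real n)) \<in> o[sequentially](T)"
  proof (rule landau_o.smallI)
    fix c :: real assume c: "c > 0"
    define M where "M = nat \<lceil>exp (2 / c)\<rceil>"
    have M1: "real M \<ge> exp (2/c)" unfolding M_def by linarith
    have Mge1: "real M \<ge> 1" using M1 c by (smt (verit) one_le_exp_iff divide_pos_pos)
    have lnM: "ln (real M) \<ge> 2 / c"
    proof -
      have "ln (exp (2/c)) \<le> ln (real M)" using M1 Mge1 by (subst ln_le_cancel_iff) auto
      then show ?thesis by simp
    qed
    show "eventually (\<lambda>n. norm (L (real n)) \<le> c * norm (T n)) sequentially"
      using uct_L[of L M, OF L_pos' L_meas L_sv Mge1] eventually_ge_at_top[of "1::nat"]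
    proof eventually_elim
      case (elim n)
      have Ln: "L (real n) > 0" using L_pos elim by simp
      have nM: "n \<le> M * n" using Mge1 by simp
      have "(\<Sum>k\<in>{n..<M*n}. (L (real n) / 2) * (1 / real k)) \<le> (\<Sum>k\<in>{n..<M*n}. ll k)"
      proof (rule sum_mono)
        fix k assume k: "k \<in> {n..<M*n}"
        then have "real k \<le> real M * real n" by (simp flip: of_nat_mult)
        then have "L (real n) / 2 \<le> L (real k)" using elim(1) k by auto
        moreover have "real k > 0" using k elim(2) by simp
        ultimately have "(L (real n) / 2) / real k \<le> L (real k) / real k"
          by (intro divide_right_mono) auto
        then show "(L (real n) / 2) * (1 / real k) \<le> ll k"
          by (simp add: ll_def)
      qed
      also have "\<dots> \<le> T n" unfolding T_def by (rule tl_ge_sum[OF ll_nn ll_sum nM])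
      finally have s1: "(L (real n) / 2) * (\<Sum>k\<in>{n..<M*n}. 1 / real k) \<le> T n"
        by (simp add: sum_distrib_left)
      have "ln (real (M * n)) - ln (real n) \<le> (\<Sum>k\<in>{n..<M*n}. 1 / real k)"
        by (rule harm_ln[OF elim(2) nM])
      moreover have "ln (real (M * n)) - ln (real n) = ln (real M)"
        using Mge1 elim(2) by (simp add: ln_mult)
      ultimately have "2 / c \<le> (\<Sum>k\<in>{n..<M*n}. 1 / real k)" using lnM by simp
      then have "(L (real n) / 2) * (2 / c) \<le> T n"
        using s1 Ln by (smt (verit) mult_left_mono half_gt_zero)
      then show ?case using Ln T_pos[of n] c by (simp add: field_simps)
    qed
  qed
  have A': "(\<lambda>n. L (real n) / T n) \<longlonglongrightarrow> 0" by (rule smalloD_tendsto[OF A])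
  have G: "((\<lambda>x. (ell_star L x - ell_star L (b * x)) / ell_star L x) \<longlongrightarrow> 0) at_top"
    if b: "b \<ge> 1" for b
  proof -
    have b1: "b + 1 \<ge> 1" using b by simp
    have seq: "eventually (\<lambda>N. N \<ge> 1 \<and> (\<forall>k. N \<le> k \<and> real k \<le> (b + 1) * real N \<longrightarrow>
            L (real N) / 2 \<le> L (real k) \<and> L (real k) \<le> 2 * L (real N))) sequentially"
      using uct_L[of L "b+1", OF L_pos' L_meas L_sv b1] eventually_ge_at_top[of "1::nat"]
      by eventually_elim auto
    have evx: "eventually (\<lambda>x::real. nat \<lceil>x\<rceil> \<ge> 1 \<and> (\<forall>k. nat \<lceil>x\<rceil> \<le> k \<and> real k \<le> (b + 1) * real (nat \<lceil>x\<rceil>) \<longrightarrow>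
            L (real (nat \<lceil>x\<rceil>)) / 2 \<le> L (real k) \<and> L (real k) \<le> 2 * L (real (nat \<lceil>x\<rceil>)))) at_top"
      using eventually_compose_filterlim[OF seq filterlim_nat_ceiling] by (simp only:)
    have lim: "((\<lambda>x::real. 2 * b * (L (real (nat \<lceil>x\<rceil>)) / T (nat \<lceil>x\<rceil>))) \<longlongrightarrow> 0) at_top"
      using tendsto_mult[OF tendsto_const filterlim_compose[OF A' filterlim_nat_ceiling], of "2*b"] by simp
    show ?thesis
    proof (rule tendsto_sandwich[OF _ _ tendsto_const lim])
      show "eventually (\<lambda>x. 0 \<le> (ell_star L x - ell_star L (b * x)) / ell_star L x) at_top"
        using eventually_ge_at_top[of "0::real"]
      proof eventually_elim
        case (elim x)
        have "nat \<lceil>x\<rceil> \<le> nat \<lceil>b * x\<rceil>" using elim b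
          by (intro nat_mono ceiling_mono) (simp add: mult_right_mono[of 1 b x, simplified])
        then have "T (nat \<lceil>b * x\<rceil>) \<le> T (nat \<lceil>x\<rceil>)" unfolding T_def by (rule tl_mono[OF ll_nn ll_sum])
        then show ?case using ES_pos[of x] by (simp add: ES)
      qed
      show "eventually (\<lambda>x. (ell_star L x - ell_star L (b * x)) / ell_star L x
               \<le> 2 * b * (L (real (nat \<lceil>x\<rceil>)) / T (nat \<lceil>x\<rceil>))) at_top"
        using evx eventually_ge_at_top[of "1::real"]
      proof eventually_elim
        case (elim x)
        define N where "N = nat \<lceil>x\<rceil>"
        define N' where "N' = nat \<lceil>b * x\<rceil>"
        have bx: "x \<le> b * x" using elim b by (simp add: mult_right_mono[of 1 b x, simplified])
        have NN': "N \<le> N'" unfolding N_def N'_def using bx by (intro nat_mono ceiling_mono)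
        have N1: "N \<ge> 1" using elim by (simp add: N_def)
        have xN: "x \<le> real N" "real N \<le> x + 1" using nat_ceil_bounds[of x] elim by (auto simp: N_def)
        have xN': "real N' \<le> b * x + 1" using nat_ceil_bounds[of "b*x"] elim bx by (auto simp: N'_def)
        have LN: "L (real N) > 0" using L_pos N1 by simp
        have diff: "ell_star L x - ell_star L (b * x) = (\<Sum>k\<in>{N..<N'}. ll k)"
          unfolding ES N_def[symmetric] N'_def[symmetric] T_def by (rule tl_diff[OF ll_nn ll_sum NN'])
        have "(\<Sum>k\<in>{N..<N'}. ll k) \<le> (\<Sum>k\<in>{N..<N'}. 2 * L (real N) / real N)"
        proof (rule sum_mono)
          fix k assume k: "k \<in> {N..<N'}"
          have "real k \<le> (b + 1) * real N"
          proof -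
            have "real k < real N'" using k by simp
            also have "\<dots> \<le> b * x + 1" by (rule xN')
            also have "\<dots> \<le> b * real N + real N" using xN(1) N1 b by (smt (verit) mult_left_mono of_nat_1 of_nat_mono)
            finally show ?thesis by (simp add: algebra_simps)
          qed
          then have "L (real k) \<le> 2 * L (real N)" using elim(1) k by (auto simp: N_def)
          moreover have "real k \<ge> real N" "real N \<ge> 1" using k N1 by auto
          moreover have "L (real k) > 0" using L_pos calculation(2,3) by simp
          ultimately show "ll k \<le> 2 * L (real N) / real N"
            unfolding ll_def by (smt (verit) divide_mono)
        qed
        also have "\<dots> = real (N' - N) * (2 * L (real N) / real N)" by simp
        also have "\<dots> \<le> (b * real N) * (2 * L (real N) / real N)"
        proof (rule mult_right_mono)
          have "real (N' - N) = real N' - real N" using NN' by simp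
          also have "\<dots> \<le> b * x + 1 - x" using xN' xN by simp
          also have "\<dots> \<le> b * real N" using xN b elim by (smt (verit) mult_left_mono)
          finally show "real (N' - N) \<le> b * real N" .
          show "0 \<le> 2 * L (real N) / real N" using LN by simp
        qed
        also have "\<dots> = 2 * b * L (real N)" using N1 by simp
        finally have "ell_star L x - ell_star L (b * x) \<le> 2 * b * L (real N)" using diff by simp
        then show ?case using ES_pos[of x] T_pos[of N] by (simp add: ES N_def[symmetric] divide_right_mono)
      qed
    qed
  qed
  have SV: "slowly_varying (ell_star L)"
    unfolding slowly_varying_def
  proof (intro allI impI)
    fix c :: real assume c: "c > 0"
    have ne: "ell_star L x \<noteq> 0" for x using ES_pos[of x] by simp
    show "((\<lambda>x. ell_star L (c * x) / ell_star L x) \<longlongrightarrow> 1) at_top"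
    proof (cases "c \<ge> 1")
      case True
      have "((\<lambda>x. 1 - (ell_star L x - ell_star L (c * x)) / ell_star L x) \<longlongrightarrow> 1 - 0) at_top"
        by (intro tendsto_diff tendsto_const G True)
      moreover have "1 - (ell_star L x - ell_star L (c * x)) / ell_star L x = ell_star L (c * x) / ell_star L x" for x
        using ne[of x] by (simp add: field_simps)
      ultimately show ?thesis by simp
    next
      case False
      define b where "b = 1 / c"
      have b: "b \<ge> 1" using False c by (simp add: b_def)
      have fl: "filterlim (\<lambda>x. c * x) at_top at_top"
        using filterlim_tendsto_pos_mult_at_top[OF tendsto_const c filterlim_ident] by simp
      have "((\<lambda>x. (ell_star L (c * x) - ell_star L (b * (c * x))) / ell_star L (c * x)) \<longlongrightarrow> 0) at_top"
        using filterlim_compose[OF G[OF b] fl] by simp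
      then have "((\<lambda>x. 1 / (1 - (ell_star L (c * x) - ell_star L (b * (c * x))) / ell_star L (c * x))) \<longlongrightarrow> 1 / (1 - 0)) at_top"
        by (intro tendsto_intros) auto
      moreover have "1 / (1 - (ell_star L (c * x) - ell_star L (b * (c * x))) / ell_star L (c * x)) = ell_star L (c * x) / ell_star L x" for x
      proof -
        have bx: "b * (c * x) = x" using c by (simp add: b_def)
        have e: "ell_star L (b * (c * x)) = ell_star L x" by (subst bx) (rule refl)
        show ?thesis unfolding e using ne[of x] ne[of "c*x"] by (simp add: field_simps)
      qed
      ultimately show ?thesis by simp
    qed
  qed
  have ES_lim: "(ell_star L \<longlongrightarrow> 0) at_top"
  proof -
    have "((\<lambda>x::real. T (nat \<lceil>x\<rceil>)) \<longlongrightarrow> 0) at_top" by (rule filterlim_compose[OF T_lim filterlim_nat_ceiling])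
    then show ?thesis by (simp add: ES[abs_def])
  qed
  have Lo: "(\<lambda>n. L (real n)) \<in> o[sequentially](\<lambda>n. ell_star L (real n))"
    using A by (simp add: ES)
  have mu_sum: "summable mu" using mu_prob by (rule sums_summable)
  have mu_ev0: "eventually (\<lambda>k. norm (mu k) \<ge> (1/2) * norm (L (real k) / (real k)\<^sup>2)) sequentially"
    by (rule asymp_equiv_imp_eventually_ge[OF mu_asymp]) simp
  have mu_ev: "eventually (\<lambda>k. mu k > 0) sequentially"
    using mu_ev0 eventually_ge_at_top[of "1::nat"]
  proof eventually_elim
    case (elim k)
    have "L (real k) / (real k)\<^sup>2 > 0" using L_pos[of "real k"] elim(2) by simp
    moreover have "norm (L (real k) / (real k)\<^sup>2) = L (real k) / (real k)\<^sup>2"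
      using L_pos[of "real k"] elim(2) by simp
    ultimately have "(1/2) * norm (L (real k) / (real k)\<^sup>2) > 0" by linarith
    then show ?case using elim(1) mu_nonneg[of k] by (smt (verit) real_norm_def)
  qed
  have tailX_eq: "tailX mu y = tls mu (nat \<lceil>y + 1\<rceil>)" for y
  proof -
    have "{k. real k - 1 \<ge> y} = {k. real k \<ge> y + 1}" by auto
    then show ?thesis unfolding tailX_def using infsum_tl[OF mu_nonneg mu_sum, of "y+1"] by simp
  qed
  have tlmu_pos: "tls mu N > 0" for N
  proof -
    obtain N0 where N0: "\<And>k. k \<ge> N0 \<Longrightarrow> mu k > 0" using mu_ev by (auto simp: eventually_sequentially)
    have "tls mu (max N N0) \<le> tls mu N" by (rule tl_mono[OF mu_nonneg mu_sum]) simp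
    moreover have "tls mu (max N N0) = mu (max N N0) + tls mu (Suc (max N N0))" by (rule tl_Suc[OF mu_nonneg mu_sum])
    moreover have "tls mu (Suc (max N N0)) \<ge> 0" by (rule tl_nonneg[OF mu_nonneg mu_sum])
    moreover have "mu (max N N0) > 0" by (rule N0) simp
    ultimately show ?thesis by linarith
  qed
  have t_lim: "(\<lambda>n. tailX mu (a n)) \<longlonglongrightarrow> 0"
  proof -
    have "(\<lambda>n. (real n * tailX mu (a n)) * inverse (real n)) \<longlonglongrightarrow> 1 * 0"
      by (intro tendsto_mult a_def lim_inverse_n)
    moreover have "eventually (\<lambda>n. (real n * tailX mu (a n)) * inverse (real n) = tailX mu (a n)) sequentially"
      using eventually_ge_at_top[of "1::nat"] by eventually_elim simp
    ultimately show ?thesis by (simp add: tendsto_cong)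
  qed
  have a_inf: "filterlim a at_top sequentially"
    unfolding filterlim_at_top
  proof
    fix Z :: real
    have P: "tls mu (nat \<lceil>Z + 1\<rceil>) > 0" by (rule tlmu_pos)
    show "eventually (\<lambda>n. a n \<ge> Z) sequentially"
      using order_tendstoD(2)[OF t_lim P]
    proof eventually_elim
      case (elim n)
      show ?case
      proof (rule ccontr)
        assume "\<not> a n \<ge> Z"
        then have "nat \<lceil>a n + 1\<rceil> \<le> nat \<lceil>Z + 1\<rceil>" by (intro nat_mono ceiling_mono) simp
        then have "tls mu (nat \<lceil>Z + 1\<rceil>) \<le> tls mu (nat \<lceil>a n + 1\<rceil>)" by (rule tl_mono[OF mu_nonneg mu_sum])
        then show False using elim by (simp add: tailX_eq)
      qed
    qed
  qed
  have a_ge1: "eventually (\<lambda>n. a n \<ge> 1) sequentially" using a_inf by (simp add: filterlim_at_top)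
  define J where "J n = nat \<lfloor>a n\<rfloor> + 1" for n
  define Nc where "Nc n = nat \<lceil>a n\<rceil>" for n
  have J_inf: "filterlim J sequentially sequentially"
    unfolding filterlim_at_top
  proof
    fix Z :: nat
    show "eventually (\<lambda>n. J n \<ge> Z) sequentially"
      using a_inf[unfolded filterlim_at_top, rule_format, of "real Z"]
    proof eventually_elim
      case (elim n) then show ?case unfolding J_def using nat_floor_bounds[of "a n"] by linarith
    qed
  qed
  have Nc_inf: "filterlim Nc sequentially sequentially"
    unfolding filterlim_at_top
  proof
    fix Z :: nat
    show "eventually (\<lambda>n. Nc n \<ge> Z) sequentially"
      using a_inf[unfolded filterlim_at_top, rule_format, of "real Z"]
    proof eventually_elim
      case (elim n) then show ?case unfolding Nc_def using nat_ceil_bounds[of "a n"] by linarith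
    qed
  qed
  define r where "r j = real j * mu (Suc j)" for j
  have r_nn: "r j \<ge> 0" for j using mu_nonneg by (simp add: r_def)
  have r_sum: "summable r"
  proof -
    have "summable (\<lambda>j. real (Suc j) * mu (Suc j))"
      using mean_fin by (subst summable_Suc_iff)
    then show ?thesis
      by (rule summable_comparison_test'[where N=0]) (use mu_nonneg in \<open>auto simp: r_def intro!: mult_right_mono\<close>)
  qed
  have llS_nn: "ll (Suc j) \<ge> 0" for j by (rule ll_nn)
  have llS_sum: "summable (\<lambda>j. ll (Suc j))" using ll_sum by (subst summable_Suc_iff)
  have r_eq: "r \<sim>[sequentially] (\<lambda>j. ll (Suc j))"
  proof -
    have h1: "(\<lambda>j. mu (Suc j)) \<sim>[sequentially] (\<lambda>j. L (real (Suc j)) / (real (Suc j))\<^sup>2)"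
      by (rule asymp_equiv_compose'[OF mu_asymp filterlim_Suc])
    have h2: "(\<lambda>j. real j) \<sim>[sequentially] (\<lambda>j. real (Suc j))"
      by (rule asymp_equivI') (rule LIMSEQ_n_over_Suc_n)
    have "r \<sim>[sequentially] (\<lambda>j. real (Suc j) * (L (real (Suc j)) / (real (Suc j))\<^sup>2))"
      unfolding r_def[abs_def] by (rule asymp_equiv_mult[OF h2 h1])
    moreover have "(\<lambda>j. real (Suc j) * (L (real (Suc j)) / (real (Suc j))\<^sup>2)) = (\<lambda>j. ll (Suc j))"
      by (auto simp: ll_def power2_eq_square fun_eq_iff simp del: of_nat_Suc)
    ultimately show ?thesis by simp
  qed
  have R_eq: "(\<lambda>N. tls r N) \<sim>[sequentially] (\<lambda>N. T (Suc N))"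
  proof -
    have "(\<lambda>N. tls r N) \<sim>[sequentially] (\<lambda>N. tls (\<lambda>j. ll (Suc j)) N)"
      by (rule tail_equiv(2)[OF r_nn llS_nn llS_sum r_eq])
    moreover have "tls (\<lambda>j. ll (Suc j)) N = T (Suc N)" for N
      by (simp add: tls_def T_def)
    ultimately show ?thesis by simp
  qed
  have T2: "(\<lambda>N. T (Suc (Suc N))) \<sim>[sequentially] T"
  proof (rule smallo_imp_asymp_equiv, rule smalloI_tendsto)
    have q: "(\<lambda>N. (ll N + ll (Suc N)) / T N) \<longlonglongrightarrow> 0"
    proof (rule tendsto_sandwich[OF _ _ tendsto_const])
      show "eventually (\<lambda>N. 0 \<le> (ll N + ll (Suc N)) / T N) sequentially"
        using ll_nn T_nn by (auto intro!: always_eventually)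
      show "(\<lambda>N. L (real N) / T N + L (real (Suc N)) / T (Suc N)) \<longlonglongrightarrow> 0"
        using tendsto_add[OF A' LIMSEQ_Suc[OF A']] by simp
      show "eventually (\<lambda>N. (ll N + ll (Suc N)) / T N \<le> L (real N) / T N + L (real (Suc N)) / T (Suc N)) sequentially"
        using eventually_ge_at_top[of "1::nat"]
      proof eventually_elim
        case (elim N)
        have LN: "L (real N) > 0" "L (real (Suc N)) > 0" using L_pos elim by auto
        have "ll N \<le> L (real N)" using LN elim by (simp add: ll_def divide_le_eq)
        moreover have "ll (Suc N) \<le> L (real (Suc N))" using LN by (simp add: ll_def divide_le_eq del: of_nat_Suc)
        ultimately have "(ll N + ll (Suc N)) / T N \<le> L (real N) / T N + L (real (Suc N)) / T N"
          using T_pos[of N] by (simp add: add_divide_distrib[symmetric] divide_right_mono)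
        moreover have "L (real (Suc N)) / T N \<le> L (real (Suc N)) / T (Suc N)"
          using T_Suc[of N] ll_nn[of N] T_pos[of "Suc N"] LN(2) by (intro divide_left_mono) auto
        ultimately show ?case by linarith
      qed
    qed
    have "(\<lambda>N. - ((ll N + ll (Suc N)) / T N)) \<longlonglongrightarrow> - 0" by (rule tendsto_minus[OF q])
    moreover have "- ((ll N + ll (Suc N)) / T N) = (T (Suc (Suc N)) - T N) / T N" for N
    proof -
      have "T (Suc (Suc N)) - T N = - (ll N + ll (Suc N))" using T_Suc[of N] T_Suc[of "Suc N"] by linarith
      then show ?thesis by (simp add: minus_divide_left)
    qed
    ultimately show "(\<lambda>N. (T (Suc (Suc N)) - T N) / T N) \<longlonglongrightarrow> 0" by simp
    show "eventually (\<lambda>N. T N \<noteq> 0) sequentially" using T_pos by (auto intro!: always_eventually simp: less_le)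
  qed
  have trunc_eq: "trunc_meanX mu y + (1 - m) = - tls r (nat \<lfloor>y\<rfloor> + 1)" if y: "y \<ge> 1" for y
  proof -
    define j where "j = nat \<lfloor>y\<rfloor>"
    have jb: "real j \<le> y" "y < real j + 1" using nat_floor_bounds[of y] y by (auto simp: j_def)
    have set: "{k. \<bar>real k - 1\<bar> \<le> y} = {..<Suc (Suc j)}"
    proof safe
      fix k assume "\<bar>real k - 1\<bar> \<le> y"
      then have "real k < real j + 2" using jb by linarith
      then show "k < Suc (Suc j)" by linarith
    next
      fix k assume "k < Suc (Suc j)"
      then have "real k \<le> real j + 1" by linarith
      then show "\<bar>real k - 1\<bar> \<le> y" using jb y by linarith
    qed
    define f where "f k = (real k - 1) * mu k" for k
    have fs: "f sums (m - 1)"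
    proof -
      have "(\<lambda>k. real k * mu k - mu k) sums (m - 1)"
        unfolding m_def by (rule sums_diff[OF summable_sums[OF mean_fin] mu_prob])
      moreover have "(\<lambda>k. real k * mu k - mu k) = f" by (auto simp: f_def fun_eq_iff algebra_simps)
      ultimately show ?thesis by simp
    qed
    then have "(\<lambda>i. f (i + Suc (Suc j))) sums (m - 1 - (\<Sum>i<Suc (Suc j). f i))"
      using sums_iff_shift[of f "Suc (Suc j)" "m - 1 - (\<Sum>i<Suc (Suc j). f i)"] by simp
    moreover have "(\<lambda>i. f (i + Suc (Suc j))) = (\<lambda>i. r (i + Suc j))"
      by (auto simp: f_def r_def fun_eq_iff)
    ultimately have "(\<lambda>i. r (i + Suc j)) sums (m - 1 - (\<Sum>i<Suc (Suc j). f i))" by simp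
    then have "tls r (Suc j) = m - 1 - (\<Sum>i<Suc (Suc j). f i)" unfolding tls_def by (rule sums_unique[symmetric])
    moreover have "trunc_meanX mu y = (\<Sum>i<Suc (Suc j). f i)"
      unfolding trunc_meanX_def set f_def by simp
    ultimately show ?thesis by (simp add: j_def)
  qed
  have RT: "(\<lambda>n. tls r (J n)) \<sim>[sequentially] (\<lambda>n. ell_star L (a n))"
  proof -
    have e1: "(\<lambda>n. tls r (J n)) \<sim>[sequentially] (\<lambda>n. T (Suc (J n)))"
      by (rule asymp_equiv_compose'[OF R_eq J_inf])
    have e2: "(\<lambda>n. T (Suc (J n))) \<sim>[sequentially] (\<lambda>n. T (Nc n))"
    proof (rule asymp_equiv_sandwich_real)
      show "(\<lambda>n. T (Suc (Suc (Nc n)))) \<sim>[sequentially] (\<lambda>n. T (Nc n))"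
        by (rule asymp_equiv_compose'[OF T2 Nc_inf])
      show "(\<lambda>n. T (Nc n)) \<sim>[sequentially] (\<lambda>n. T (Nc n))" by simp
      show "eventually (\<lambda>n. T (Suc (J n)) \<in> {T (Suc (Suc (Nc n)))..T (Nc n)}) sequentially"
        using a_ge1
      proof eventually_elim
        case (elim n)
        have f: "real (nat \<lfloor>a n\<rfloor>) \<le> a n" "a n < real (nat \<lfloor>a n\<rfloor>) + 1"
          using nat_floor_bounds[of "a n"] elim by auto
        have c: "a n \<le> real (Nc n)" "real (Nc n) \<le> a n + 1"
          using nat_ceil_bounds[of "a n"] elim by (auto simp: Nc_def)
        have "Nc n \<le> Suc (J n)" using f c unfolding J_def by linarith
        moreover have "Suc (J n) \<le> Suc (Suc (Nc n))" using f c unfolding J_def by linarith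
        ultimately show ?case unfolding T_def
          using tl_mono[OF ll_nn ll_sum] by auto
      qed
    qed
    have "(\<lambda>n. T (Nc n)) = (\<lambda>n. ell_star L (a n))" by (simp add: ES Nc_def fun_eq_iff)
    then show ?thesis using asymp_equiv_trans[OF e1 e2] by simp
  qed
  have part2: "(\<lambda>n. real n * trunc_meanX mu (a n) + real n * (1 - m))
            \<sim>[sequentially] (\<lambda>n. - real n * ell_star L (a n))"
  proof (rule asymp_equiv_transfer)
    show "(\<lambda>n. - real n * tls r (J n)) \<sim>[sequentially] (\<lambda>n. - real n * ell_star L (a n))"
      by (rule asymp_equiv_mult[OF asymp_equiv_refl RT])
    show "eventually (\<lambda>n. - real n * tls r (J n) = real n * trunc_meanX mu (a n) + real n * (1 - m)) sequentially"
      using a_ge1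
    proof eventually_elim
      case (elim n)
      have "real n * trunc_meanX mu (a n) + real n * (1 - m) = real n * (trunc_meanX mu (a n) + (1 - m))"
        by (simp add: algebra_simps)
      also have "\<dots> = - real n * tls r (J n)" using trunc_eq[OF elim] by (simp add: J_def)
      finally show ?case by simp
    qed
    show "eventually (\<lambda>n. - real n * ell_star L (a n) = - real n * ell_star L (a n)) sequentially" by simp
  qed
  have m1: "1 - m > 0" using mean_lt1 by (simp add: m_def)
  have R_lim: "(\<lambda>n. tls r (J n)) \<longlonglongrightarrow> 0"
    by (rule filterlim_compose[OF tl_lim[OF r_nn r_sum] J_inf])
  have part3: "(\<lambda>n. real n * trunc_meanX mu (a n)) \<sim>[sequentially] (\<lambda>n. - real n * (1 - m))"
  proof (rule asymp_equivI')
    have "(\<lambda>n. 1 + tls r (J n) / (1 - m)) \<longlonglongrightarrow> 1 + 0 / (1 - m)"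
      by (intro tendsto_intros R_lim) (use m1 in simp)
    moreover have "eventually (\<lambda>n. 1 + tls r (J n) / (1 - m) = real n * trunc_meanX mu (a n) / (- real n * (1 - m))) sequentially"
      using a_ge1 eventually_ge_at_top[of "1::nat"]
    proof eventually_elim
      case (elim n)
      have t: "trunc_meanX mu (a n) = - tls r (J n) - (1 - m)" using trunc_eq[OF elim(1)] by (simp add: J_def)
      show ?case unfolding t using m1 elim(2) by (simp add: field_simps)
    qed
    ultimately show "((\<lambda>n. real n * trunc_meanX mu (a n) / (- real n * (1 - m))) \<longlonglongrightarrow> 1)"
      by (simp add: tendsto_cong)
  qed
  have tail_bound: "y * tailX mu y \<le> tls r (nat \<lceil>y\<rceil>)" if y: "y \<ge> 1" for y
  proof -
    define c where "c = nat \<lceil>y\<rceil>"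
    have cb: "y \<le> real c" using nat_ceil_bounds[of y] y by (auto simp: c_def)
    have "nat \<lceil>y + 1\<rceil> = Suc c" unfolding c_def using y by (simp add: nat_add_distrib)
    then have tX: "tailX mu y = (\<Sum>i. mu (i + Suc c))" by (simp add: tailX_eq tls_def)
    have s1: "summable (\<lambda>i. y * mu (i + Suc c))"
      by (intro summable_mult summable_ignore_initial_segment mu_sum)
    have s2: "summable (\<lambda>i. r (i + c))" by (intro summable_ignore_initial_segment r_sum)
    have "(\<Sum>i. y * mu (i + Suc c)) \<le> (\<Sum>i. r (i + c))"
    proof (rule suminf_le[OF _ s1 s2])
      fix i
      have "y \<le> real (i + c)" using cb by simp
      then show "y * mu (i + Suc c) \<le> r (i + c)"
        unfolding r_def using mu_nonneg[of "i + Suc c"] by (simp add: mult_right_mono)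
    qed
    moreover have "(\<Sum>i. y * mu (i + Suc c)) = y * tailX mu y"
      unfolding tX by (rule suminf_mult[OF summable_ignore_initial_segment[OF mu_sum]])
    ultimately show ?thesis by (simp add: tls_def c_def)
  qed
  have part4: "a \<in> o[sequentially](\<lambda>n. real n)"
  proof (rule landau_o.smallI)
    fix c :: real assume c: "c > 0"
    have ev1: "eventually (\<lambda>n. real n * tailX mu (a n) > 1/2) sequentially"
      by (rule order_tendstoD(1)[OF a_def]) simp
    have ev2: "eventually (\<lambda>n. tls r (Nc n) < c / 2) sequentially"
      using order_tendstoD(2)[OF filterlim_compose[OF tl_lim[OF r_nn r_sum] Nc_inf], of "c/2"] c by simp
    show "eventually (\<lambda>n. norm (a n) \<le> c * norm (real n)) sequentially"
      using ev1 ev2 a_ge1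
    proof eventually_elim
      case (elim n)
      have "a n * tailX mu (a n) \<le> tls r (Nc n)" unfolding Nc_def by (rule tail_bound[OF elim(3)])
      then have "real n * (a n * tailX mu (a n)) \<le> real n * (c / 2)"
        using elim(2) by (intro mult_left_mono) auto
      moreover have "a n * (1/2) \<le> a n * (real n * tailX mu (a n))"
        using elim(1,3) by (intro mult_left_mono) auto
      ultimately have "a n * (1/2) \<le> real n * (c/2)" by (simp add: algebra_simps)
      then show ?case using elim(3) by (simp add: mult.commute)
    qed
  qed
  show ?thesis using SV ES_lim Lo part2 part3 part4 by (simp add: m_def)
qed


end
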